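(* Let $\eta$ be a nonnegative integer valued random variable with $P(\eta=0)<1$ and let $(p_n)$ be a sequence in $(0,1]$ with $\lim_{n\to\infty}p_n=1$. Consider the auxiliary process on the complete graph $\mathcal{K}_{n+1}$ with survival parameter $p_n$, in which the $\eta_v$ are i.i.d. with the distribution of $\eta$. Then for every $c\in(0,1)$, \[\lim_{n\to\infty}P\big(R(\mathcal{K}_{n+1},p_n)<k_1\big)=0,\qquad\text{where }k_1=k_1(n)=\lfloor cn\rfloor-1.\]
   Context: Auxiliary process on a connected graph $\mathcal{G}=(\mathcal{V},\mathcal{E})$ (here the complete graph $\mathcal{K}_{n+1}$ on $n+1$ vertices, in which a step goes to a uniformly chosen vertex other than the current one) with root $o$ and survival parameter $p$: each $v\neq o$ initially carries $\eta_v$ inactive particles and $o$ carries $1+\eta_o$ active particles (the original particles). At each round $k=1,2,\dots$ exactly one active particle is chosen (by an arbitrary rule) to participate; independently of everything else it survives with probability $p$, in which case it moves to a uniformly chosen neighbouring vertex and activates all inactive particles there, and otherwise it dies and is removed. When the last living original active particle dies, all remaining inactive particles are called extra and a new extra active particle is injected at $o$; afterwards, each time the only living active particle dies, a new extra active particle is injected at $o$. For round $k$ define $X_k=0$ if the participating particle dies; $X_k=1$ if it survives and moves to a previously visited vertex or to a never-visited vertex $v$ with $\eta_v=0$; $X_k=j\geq2$ if it survives and moves to a never-visited vertex $v$ with $\eta_v=j-1$. Set $A'_0=1+\eta_o$, $A'_k=1+\eta_o+\sum_{j=1}^k(X_j-1)$, and $R=R(\mathcal{G},p)=\inf\{k:A'_k=0\}$.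 *)

theory Defs
  imports "HOL-Probability.Probability" "HOL-Library.Multiset"
begin

text \<open>Auxiliary process on the complete graph K_{n+1}, vertex set {0..n}, root o = 0.
  A state is (multiset of positions of living active original particles, set of visited vertices).
  The vector eta :: nat => nat gives the number of initial particles at each vertex
  (at the root: eta 0 extra active particles besides the one original).
  A rule chooses, in round k and state s, the position of the participating active particle.\<close>

type_synonym aux_state = "nat multiset \<times> nat set"

definition aux_init :: "(nat \<Rightarrow> nat) \<Rightarrow> aux_state" where
  "aux_init \<eta> = (replicate_mset (1 + \<eta> 0) 0, {0})"

definition aux_step :: "real \<Rightarrow> nat \<Rightarrow> (nat \<Rightarrow> nat) \<Rightarrow> nat \<Rightarrow> aux_state \<Rightarrow> (aux_state \<times> nat) pmf" where
  "aux_step p n \<eta> u s = do {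
     b \<leftarrow> bernoulli_pmf p;
     if \<not> b then return_pmf ((fst s - {#u#}, snd s), 0)
     else do {
       v \<leftarrow> pmf_of_set ({..n} - {u});
       let new = (if v \<in> snd s then 0 else \<eta> v);
       return_pmf ((fst s - {#u#} + replicate_mset (1 + new) v, insert v (snd s)), 1 + new)
     }
   }"

text \<open>Trajectory of the X-values for at most m rounds starting at round i+1; the record is
  stopped once no original active particle is alive (i.e. at time R); the later evolution
  (extra particles) is irrelevant for R.\<close>
fun aux_traj :: "real \<Rightarrow> nat \<Rightarrow> (nat \<Rightarrow> aux_state \<Rightarrow> nat) \<Rightarrow> (nat \<Rightarrow> nat) \<Rightarrow> nat \<Rightarrow> nat \<Rightarrow> aux_state \<Rightarrow> nat list pmf" where
  "aux_traj p n rule \<eta> i 0 s = return_pmf []"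
| "aux_traj p n rule \<eta> i (Suc m) s =
     (if fst s = {#} then return_pmf []
      else do {
        (s', x) \<leftarrow> aux_step p n \<eta> (rule i s) s;
        xs \<leftarrow> aux_traj p n rule \<eta> (Suc i) m s';
        return_pmf (x # xs)
      })"

text \<open>A'_k = 1 + eta_o + sum_{j=1}^k (X_j - 1), with xs ! (j-1) = X_j.\<close>
definition Aprime :: "(nat \<Rightarrow> nat) \<Rightarrow> nat list \<Rightarrow> nat \<Rightarrow> int" where
  "Aprime \<eta> xs k = int (1 + \<eta> 0) + (\<Sum>j<k. int (xs ! j) - 1)"

definition aux_law :: "nat pmf \<Rightarrow> real \<Rightarrow> (nat \<Rightarrow> aux_state \<Rightarrow> nat) \<Rightarrow> nat \<Rightarrow> nat \<Rightarrow> ((nat \<Rightarrow> nat) \<times> nat list) pmf" where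
  "aux_law eta p rule n m =
     Pi_pmf {..n} 0 (\<lambda>_. eta) \<bind> (\<lambda>\<eta>. map_pmf (\<lambda>xs. (\<eta>, xs)) (aux_traj p n rule \<eta> 0 m (aux_init \<eta>)))"

text \<open>P(R(K_{n+1},p) < K), R = inf{k. A'_k = 0}; for k < K only X_1..X_{K-1} matter.\<close>
definition prob_R_less :: "nat pmf \<Rightarrow> real \<Rightarrow> (nat \<Rightarrow> aux_state \<Rightarrow> nat) \<Rightarrow> nat \<Rightarrow> int \<Rightarrow> real" where
  "prob_R_less eta p rule n K =
     measure_pmf.prob (aux_law eta p rule n (nat K))
       {(\<eta>, xs). \<exists>k. int k < K \<and> k \<le> length xs \<and> Aprime \<eta> xs k = 0}"

end

theory Submission imports Defs begin

lemma traj_suc_emeasure: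
  assumes ne: "fst s \<noteq> {#}"
  shows "emeasure (measure_pmf (aux_traj p n rule \<eta> i (Suc m) s)) {xs. length xs < Suc m} =
    (\<integral>\<^sup>+z. emeasure (measure_pmf (aux_traj p n rule \<eta> (Suc i) m (fst z))) {xs. length xs < m}
       \<partial>measure_pmf (aux_step p n \<eta> (rule i s) s))"
  using ne
  apply (simp add: case_prod_unfold)
  apply (rule nn_integral_cong)
  apply (simp add: nn_integral_indicator[symmetric] indicator_def)
  done

lemma step_integral:
  assumes "0 \<le> p" "p \<le> 1" "u \<le> n" "n \<ge> 1"
  shows "(\<integral>\<^sup>+z. G z \<partial>measure_pmf (aux_step p n \<eta> u s)) =
     ennreal p * ((\<Sum>v\<in>{..n}-{u}. G ((fst s - {#u#} + replicate_mset (1 + (if v \<in> snd s then 0 else \<eta> v)) v, insert v (snd s)), 1 + (if v \<in> snd s then 0 else \<eta> v))) / of_nat n)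
    + ennreal (1-p) * G ((fst s - {#u#}, snd s), 0)"
proof -
  have S: "finite ({..n}-{u})" "{..n}-{u} \<noteq> {}" "card ({..n}-{u}) = n"
    using assms by auto
  show ?thesis unfolding aux_step_def using assms S
    by (simp add: Let_def nn_integral_pmf_of_set mult.commute)
qed

definition mrg :: "nat set \<Rightarrow> (nat \<Rightarrow> nat) \<Rightarrow> (nat \<Rightarrow> nat) \<Rightarrow> nat \<Rightarrow> nat" where
  "mrg V g h = (\<lambda>w. if w \<in> V then g w else h w)"

lemma sum_ind_real: "finite A \<Longrightarrow> (\<Sum>v\<in>A. indicator B v :: real) = real (card (A \<inter> B))"
  by (simp add: indicator_def sum.If_cases Int_def)

lemma mrg_out: "v \<notin> V \<Longrightarrow> mrg V g h v = h v" by (simp add: mrg_def)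

lemma split_Pi:
  assumes "v \<notin> V" "v \<le> n"
  shows "(\<integral>\<^sup>+h. F (mrg V g h) (h v) \<partial>measure_pmf (Pi_pmf ({..n} - V) 0 (\<lambda>_. eta))) =
         (\<integral>\<^sup>+y. (\<integral>\<^sup>+h. F (mrg (insert v V) (g(v:=y)) h) y \<partial>measure_pmf (Pi_pmf ({..n} - insert v V) 0 (\<lambda>_. eta))) \<partial>measure_pmf eta)"
proof -
  have e: "{..n} - V = insert v ({..n} - insert v V)" using assms by auto
  have m: "\<And>y h. mrg V g (h(v:=y)) = mrg (insert v V) (g(v:=y)) h" using assms by (auto simp: mrg_def fun_eq_iff)
  show ?thesis
    apply (subst e) apply (subst Pi_pmf_insert) apply simp apply simp
    apply (simp add: nn_integral_pair_pmf' case_prod_unfold m)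
    done
qed

lemma int_pow:
  assumes r: "0 < r" "r \<le> 1"
  shows "(\<integral>\<^sup>+y. ennreal (r^(a+y)) \<partial>measure_pmf eta) \<le> ennreal (r^a * (1 - (1 - pmf eta 0)*(1-r)))"
proof -
  have pw: "ennreal (r^(a+y)) \<le> ennreal (r^a*r) + ennreal (r^a*(1-r)) * indicator {0} y" for y
  proof (cases "y = 0")
    case True then show ?thesis using r by (simp add: ennreal_plus[symmetric] algebra_simps del: ennreal_plus)
  next
    case False
    have "r^y \<le> r^1" using r False by (intro power_decreasing) auto
    then have "r^(a+y) \<le> r^a*r" using r by (simp add: power_add mult_left_mono)
    then show ?thesis using False by (simp add: ennreal_leI)
  qed
  have "(\<integral>\<^sup>+y. ennreal (r^(a+y)) \<partial>measure_pmf eta) \<le> (\<integral>\<^sup>+y. ennreal (r^a*r) + ennreal (r^a*(1-r)) * indicator {0} y \<partial>measure_pmf eta)"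
    by (intro nn_integral_mono pw)
  also have "\<dots> = ennreal (r^a*r) + ennreal (r^a*(1-r)) * ennreal (pmf eta 0)"
    by (simp add: nn_integral_add nn_integral_cmult_indicator emeasure_pmf_single)
  also have "\<dots> = ennreal (r^a*r + r^a*(1-r)*pmf eta 0)"
  proof -
    have nn: "0 \<le> r^a*r" "0 \<le> r^a*(1-r)" "0 \<le> pmf eta 0" "0 \<le> r^a*(1-r)*pmf eta 0" using r by auto
    show ?thesis using nn by (simp only: ennreal_mult[symmetric] ennreal_plus[symmetric])
  qed
  also have "\<dots> = ennreal (r^a * (1 - (1 - pmf eta 0)*(1-r)))"
    by (simp add: algebra_simps)
  finally show ?thesis .
qed

lemma main:
  fixes eta :: "nat pmf" and p r \<theta> :: real and n :: nat and rule
  assumes n: "n \<ge> 1" and p: "0 \<le> p" "p \<le> 1" and r: "0 < r" "r \<le> 1" and th: "0 \<le> \<theta>"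
    and key: "(1-p) + p*r*(1 - \<theta>*(1 - pmf eta 0)*(1-r)) \<le> r"
    and rl: "\<forall>k s. fst s \<noteq> {#} \<longrightarrow> rule k s \<in># fst s"
  shows "set_mset (fst s) \<subseteq> snd s \<Longrightarrow> snd s \<subseteq> {..n} \<Longrightarrow>
    \<theta> * n \<le> real n + 1 - real (card (snd s)) - real m \<Longrightarrow>
    (\<integral>\<^sup>+h. emeasure (measure_pmf (aux_traj p n rule (mrg (snd s) g h) i m s)) {xs. length xs < m}
       \<partial>measure_pmf (Pi_pmf ({..n} - snd s) 0 (\<lambda>_. eta))) \<le> ennreal (r ^ size (fst s))"
proof (induction m arbitrary: i s g)
  case 0 then show ?case by simp
next
  case (Suc m)
  obtain M V where s: "s = (M, V)" by (cases s)
  let ?P = "\<lambda>V. measure_pmf (Pi_pmf ({..n} - V) 0 (\<lambda>_. eta))"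
  let ?E = "\<lambda>i m s \<eta>. emeasure (measure_pmf (aux_traj p n rule \<eta> i m s)) {xs. length xs < m}"
  show ?case
  proof (cases "M = {#}")
    case True
    then show ?thesis using s by simp
  next
    case False
    define u where "u = rule i s"
    have uM: "u \<in># M" using rl False s u_def by auto
    have MV: "set_mset M \<subseteq> V" and Vn: "V \<subseteq> {..n}" using Suc.prems s by auto
    have uV: "u \<in> V" using MV uM by auto
    have un: "u \<le> n" using uV Vn by auto
    have finV: "finite V" using Vn finite_subset by auto
    define a where "a = size M"
    have a1: "a \<ge> 1" using False a_def by (cases M) auto
    have sizeMu: "size (M - {#u#}) = a - 1" using uM a_def by (simp add: size_Diff_singleton)
    have cardV: "\<theta> * n \<le> real n + 1 - real (card V) - real m - 1" using Suc.prems s by auto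
    have eq: "?E i (Suc m) s (mrg V g h) = ennreal p * ((\<Sum>v\<in>{..n}-{u}.
          ?E (Suc i) m (M - {#u#} + replicate_mset (1 + (if v \<in> V then 0 else h v)) v, insert v V) (mrg V g h)) / of_nat n)
        + ennreal (1-p) * ?E (Suc i) m (M - {#u#}, V) (mrg V g h)" for h
      using False s
      apply (subst traj_suc_emeasure)
       apply simp
      apply (subst step_integral)
      using p un n by (simp_all add: u_def mrg_out cong: if_cong)
    define q where "q = 1 - pmf eta 0"
    have q01: "0 \<le> q" "q \<le> 1" unfolding q_def using pmf_le_1[of eta 0] pmf_nonneg[of eta 0] by linarith+
    define G where "G v h = ?E (Suc i) m (M - {#u#} + replicate_mset (1 + (if v \<in> V then 0 else h v)) v, insert v V) (mrg V g h)" for v h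
    define D where "D h = ?E (Suc i) m (M - {#u#}, V) (mrg V g h)" for h
    have int_eq: "(\<integral>\<^sup>+h. ?E i (Suc m) s (mrg V g h) \<partial>?P V) = ennreal p * ((\<Sum>v\<in>{..n}-{u}. \<integral>\<^sup>+h. G v h \<partial>?P V) / of_nat n) + ennreal (1-p) * (\<integral>\<^sup>+h. D h \<partial>?P V)"
      unfolding eq G_def D_def by (simp add: nn_integral_add nn_integral_cmult nn_integral_divide nn_integral_sum)
    have bD: "(\<integral>\<^sup>+h. D h \<partial>?P V) \<le> ennreal (r^(a-1))"
      using Suc.IH[where s="(M - {#u#}, V)" and i="Suc i" and g=g] MV Vn cardV sizeMu unfolding D_def by (auto dest: in_diffD)
    have bin: "(\<integral>\<^sup>+h. G v h \<partial>?P V) \<le> ennreal (r^a)" if vV: "v \<in> V" for v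
    proof -
      have "size (M - {#u#} + {#v#}) = a" using sizeMu a1 by simp
      moreover have "set_mset (M - {#u#} + {#v#}) \<subseteq> V" using MV vV by (auto dest: in_diffD)
      ultimately show ?thesis
        using Suc.IH[where s="(M - {#u#} + {#v#}, V)" and i="Suc i" and g=g] Vn cardV vV unfolding G_def
        by (simp add: insert_absorb)
    qed
    have bout: "(\<integral>\<^sup>+h. G v h \<partial>?P V) \<le> ennreal (r^a * (1 - q*(1-r)))" if vV: "v \<notin> V" and vn: "v \<le> n" for v
    proof -
      define F where "F \<eta> y = ?E (Suc i) m (M - {#u#} + replicate_mset (1 + y) v, insert v V) \<eta>" for \<eta> y
      have "(\<integral>\<^sup>+h. G v h \<partial>?P V) = (\<integral>\<^sup>+h. F (mrg V g h) (h v) \<partial>?P V)"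
        unfolding G_def F_def using vV by simp
      also have "\<dots> = (\<integral>\<^sup>+y. (\<integral>\<^sup>+h. F (mrg (insert v V) (g(v:=y)) h) y \<partial>?P (insert v V)) \<partial>measure_pmf eta)"
        by (rule split_Pi[OF vV vn])
      also have "\<dots> \<le> (\<integral>\<^sup>+y. ennreal (r^(a+y)) \<partial>measure_pmf eta)"
      proof (intro nn_integral_mono)
        fix y
        have sz: "size (M - {#u#} + replicate_mset (1 + y) v) = a + y" using sizeMu a1 by simp
        have c1: "set_mset (M - {#u#} + replicate_mset (1 + y) v) \<subseteq> insert v V" using MV by (auto dest: in_diffD)
        have c2: "insert v V \<subseteq> {..n}" using Vn vn by auto
        have "card (insert v V) = card V + 1" using finV vV by simp
        then have c3: "\<theta> * n \<le> real n + 1 - real (card (insert v V)) - real m" using cardV by simp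
        have ih: "(\<integral>\<^sup>+h. F (mrg (insert v V) (g(v:=y)) h) y \<partial>?P (insert v V)) \<le> ennreal (r ^ size (M - {#u#} + replicate_mset (1 + y) v))"
          unfolding F_def using Suc.IH[where s="(M - {#u#} + replicate_mset (1 + y) v, insert v V)" and i="Suc i" and g="g(v:=y)"] c1 c2 c3
          by (simp only: fst_conv snd_conv)
        then show "(\<integral>\<^sup>+h. F (mrg (insert v V) (g(v:=y)) h) y \<partial>?P (insert v V)) \<le> ennreal (r^(a+y))"
          unfolding sz .
      qed
      also have "\<dots> \<le> ennreal (r^a * (1 - q*(1-r)))" using int_pow[OF r, where a=a and eta=eta] unfolding q_def .
      finally show ?thesis .
    qed
    define b where "b v = (if v \<in> V then r^a else r^a*(1-q*(1-r)))" for v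
    have b0: "0 \<le> b v" for v
    proof -
      have "q*(1-r) \<le> 1" using q01 r by (simp add: mult_le_one)
      then show ?thesis unfolding b_def using r by auto
    qed
    have bsum: "(\<Sum>v\<in>{..n}-{u}. \<integral>\<^sup>+h. G v h \<partial>?P V) \<le> ennreal (\<Sum>v\<in>{..n}-{u}. b v)"
    proof -
      have "(\<Sum>v\<in>{..n}-{u}. \<integral>\<^sup>+h. G v h \<partial>?P V) \<le> (\<Sum>v\<in>{..n}-{u}. ennreal (b v))"
        by (intro sum_mono) (auto simp: b_def intro: bin bout)
      also have "\<dots> = ennreal (\<Sum>v\<in>{..n}-{u}. b v)" using b0 by simp
      finally show ?thesis .
    qed
    have sumb: "(\<Sum>v\<in>{..n}-{u}. b v) = real n * r^a - real (n + 1 - card V) * (r^a*q*(1-r))"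
    proof -
      have "b v = r^a - (r^a*q*(1-r)) * indicator ({..n}-V) v" if "v \<in> {..n}-{u}" for v
        using that by (auto simp: b_def indicator_def algebra_simps)
      then have "(\<Sum>v\<in>{..n}-{u}. b v) = (\<Sum>v\<in>{..n}-{u}. r^a - (r^a*q*(1-r)) * indicator ({..n}-V) v)"
        by (rule sum.cong[OF refl])
      also have "\<dots> = real n * r^a - (r^a*q*(1-r)) * real (card (({..n}-{u}) \<inter> ({..n}-V)))"
      proof -
        have "(\<Sum>v\<in>{..n}-{u}. indicator ({..n}-V) v :: real) = real (card (({..n}-{u}) \<inter> ({..n}-V)))"
          by (rule sum_ind_real) simp
        then show ?thesis using un by (simp add: sum_subtractf sum_distrib_left[symmetric])
      qed
      also have "({..n}-{u}) \<inter> ({..n}-V) = {..n} - V" using uV by auto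
      also have "card ({..n} - V) = n + 1 - card V" using Vn finV by (simp add: card_Diff_subset)
      finally show ?thesis by simp
    qed
    define S where "S = (\<Sum>v\<in>{..n}-{u}. b v)"
    have S0: "0 \<le> S" using b0 unfolding S_def by (simp add: sum_nonneg)
    define t where "t = r^(a-1)"
    have t0: "0 \<le> t" using r unfolding t_def by simp
    have rt: "r^a = r * t" using a1 unfolding t_def by (metis Suc_diff_1 less_le_trans power_Suc zero_less_one)
    have cV: "card V \<le> n + 1" using card_mono[OF _ Vn] by simp
    have U: "\<theta> * n \<le> real (n + 1 - card V)" using cardV cV by (simp add: of_nat_diff)
    have X0: "0 \<le> r*t*q*(1-r)" using r t0 q01 by simp
    have h1: "S / n \<le> r*t*(1 - \<theta>*q*(1-r))"
    proof -
      have "S / n = r*t - (real (n + 1 - card V) / n) * (r*t*q*(1-r))"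
        unfolding S_def sumb rt using n by (simp add: field_simps)
      moreover have "\<theta> \<le> real (n + 1 - card V) / n" using U n by (simp add: field_simps)
      then have "\<theta> * (r*t*q*(1-r)) \<le> (real (n + 1 - card V) / n) * (r*t*q*(1-r))"
        by (rule mult_right_mono[OF _ X0])
      ultimately show ?thesis by (simp add: algebra_simps)
    qed
    have h2: "p * (S / n) + (1-p) * t \<le> t * ((1-p) + p*r*(1 - \<theta>*q*(1-r)))"
    proof -
      have "p * (S / n) \<le> p * (r*t*(1 - \<theta>*q*(1-r)))" using mult_left_mono[OF h1 p(1)] .
      then show ?thesis by (simp add: algebra_simps)
    qed
    have h3: "t * ((1-p) + p*r*(1 - \<theta>*q*(1-r))) \<le> t * r"
      using key t0 unfolding q_def by (simp add: mult_left_mono)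
    have "(\<integral>\<^sup>+h. ?E i (Suc m) s (mrg V g h) \<partial>?P V) \<le> ennreal p * (ennreal S / of_nat n) + ennreal (1-p) * ennreal (r^(a-1))"
      unfolding int_eq S_def by (intro add_mono mult_left_mono divide_right_mono_ennreal bsum bD) auto
    also have "\<dots> = ennreal (p * (S / n) + (1-p) * t)"
      using S0 p n r t0 unfolding t_def
      by (simp add: ennreal_of_nat_eq_real_of_nat divide_ennreal ennreal_mult[symmetric] ennreal_plus[symmetric] del: ennreal_plus)
    also have "\<dots> \<le> ennreal (r^a)"
      using h2 h3 rt by (intro ennreal_leI) (simp add: mult.commute)
    finally show ?thesis using s a_def by simp
  qed
qed

lemma step_support:
  assumes "z \<in> set_pmf (aux_step p n \<eta> u s)" "u \<in># fst s"
  shows "size (fst (fst z)) + 1 = size (fst s) + snd z"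
proof -
  have e: "size (fst s - {#u#}) + 1 = size (fst s)"
    using arg_cong[OF insert_DiffM[OF assms(2)], of size] by simp
  show ?thesis using assms(1) e unfolding aux_step_def
    by (auto simp: Let_def split: if_splits)
qed

lemma traj_support:
  assumes rl: "\<forall>k s. fst s \<noteq> {#} \<longrightarrow> rule k s \<in># fst s"
  shows "xs \<in> set_pmf (aux_traj p n rule \<eta> i m s) \<Longrightarrow> length xs \<le> m \<and>
     (\<forall>k<length xs. 0 < int (size (fst s)) + (\<Sum>j<k. int (xs!j) - 1))"
proof (induction m arbitrary: i s xs)
  case 0 then show ?case by simp
next
  case (Suc m)
  show ?case
  proof (cases "fst s = {#}")
    case True then show ?thesis using Suc.prems by simp
  next
    case False
    then obtain z xs' where z: "z \<in> set_pmf (aux_step p n \<eta> (rule i s) s)"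
      and xs': "xs' \<in> set_pmf (aux_traj p n rule \<eta> (Suc i) m (fst z))" and xs: "xs = snd z # xs'"
      using Suc.prems by (auto simp: case_prod_unfold)
    have sz: "size (fst (fst z)) + 1 = size (fst s) + snd z"
      using step_support[OF z] rl False by auto
    have ih: "length xs' \<le> m" "\<forall>k<length xs'. 0 < int (size (fst (fst z))) + (\<Sum>j<k. int (xs'!j) - 1)"
      using Suc.IH[OF xs'] by auto
    have pos: "0 < size (fst s)" using False by (simp add: nonempty_has_size)
    show ?thesis
    proof (intro conjI allI impI)
      show "length xs \<le> Suc m" using ih xs by simp
    next
      fix k assume k: "k < length xs"
      show "0 < int (size (fst s)) + (\<Sum>j<k. int (xs!j) - 1)"
      proof (cases k)
        case 0 then show ?thesis using pos by simp
      next
        case (Suc k')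
        then have "k' < length xs'" using k xs by simp
        then have "0 < int (size (fst (fst z))) + (\<Sum>j<k'. int (xs'!j) - 1)" using ih by auto
        moreover have "(\<Sum>j<k. int (xs!j) - 1) = (int (snd z) - 1) + (\<Sum>j<k'. int (xs'!j) - 1)"
          unfolding Suc xs by (subst sum.lessThan_Suc_shift) simp
        ultimately show ?thesis using sz by linarith
      qed
    qed
  qed
qed

lemma law_bound:
  fixes eta :: "nat pmf" and p r \<theta> :: real and n :: nat and rule and K :: int
  assumes n: "n \<ge> 1" and p: "0 \<le> p" "p \<le> 1" and r: "0 < r" "r \<le> 1" and th: "0 \<le> \<theta>"
    and key: "(1-p) + p*r*(1 - \<theta>*(1 - pmf eta 0)*(1-r)) \<le> r"
    and rl: "\<forall>k s. fst s \<noteq> {#} \<longrightarrow> rule k s \<in># fst s"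
    and mc: "\<theta> * n \<le> real n - real (nat K)"
  shows "prob_R_less eta p rule n K \<le> r"
proof -
  define m where "m = nat K"
  let ?L = "aux_law eta p rule n m"
  define E where "E = {(\<eta>, xs). \<exists>k. int k < K \<and> k \<le> length xs \<and> Aprime \<eta> xs k = 0}"
  define B where "B = {(\<eta>::nat\<Rightarrow>nat, xs::nat list). length xs < m}"
  have sub: "E \<inter> set_pmf ?L \<subseteq> B"
  proof
    fix z assume z: "z \<in> E \<inter> set_pmf ?L"
    obtain \<eta> xs where zz: "z = (\<eta>, xs)" by (cases z)
    have xs: "xs \<in> set_pmf (aux_traj p n rule \<eta> 0 m (aux_init \<eta>))"
      using z zz unfolding aux_law_def by auto
    obtain k where k: "int k < K" "k \<le> length xs" "Aprime \<eta> xs k = 0" using z zz unfolding E_def by auto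
    have sp: "length xs \<le> m" "\<forall>k<length xs. 0 < int (size (fst (aux_init \<eta>))) + (\<Sum>j<k. int (xs!j) - 1)"
      using traj_support[OF rl xs] by auto
    have "\<not> k < length xs"
    proof
      assume "k < length xs"
      then have "0 < int (size (fst (aux_init \<eta>))) + (\<Sum>j<k. int (xs!j) - 1)" using sp by auto
      then show False using k(3) unfolding Aprime_def aux_init_def by simp
    qed
    then have "length xs = k" using k by simp
    then have "length xs < m" using k(1) unfolding m_def by simp
    then show "z \<in> B" using zz unfolding B_def by simp
  qed
  have "emeasure (measure_pmf ?L) B = (\<integral>\<^sup>+h. emeasure (measure_pmf (aux_traj p n rule h 0 m (aux_init h))) {xs. length xs < m}
       \<partial>measure_pmf (Pi_pmf {..n} 0 (\<lambda>_. eta)))"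
    unfolding aux_law_def B_def by (simp add: vimage_def)
  also have "\<dots> = (\<integral>\<^sup>+h. (\<lambda>\<eta> y. emeasure (measure_pmf (aux_traj p n rule \<eta> 0 m (replicate_mset (1 + y) 0, {0}))) {xs. length xs < m}) (mrg {} (\<lambda>_. 0) h) (h 0)
       \<partial>measure_pmf (Pi_pmf ({..n} - {}) 0 (\<lambda>_. eta)))"
    by (simp add: mrg_def aux_init_def)
  also have "\<dots> = (\<integral>\<^sup>+y. (\<integral>\<^sup>+h. emeasure (measure_pmf (aux_traj p n rule (mrg {0} ((\<lambda>_. 0)(0:=y)) h) 0 m (replicate_mset (1 + y) 0, {0}))) {xs. length xs < m}
       \<partial>measure_pmf (Pi_pmf ({..n} - {0}) 0 (\<lambda>_. eta))) \<partial>measure_pmf eta)"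
    by (subst split_Pi) auto
  also have "\<dots> \<le> (\<integral>\<^sup>+y. ennreal r \<partial>measure_pmf eta)"
  proof (intro nn_integral_mono)
    fix y
    have "(\<integral>\<^sup>+h. emeasure (measure_pmf (aux_traj p n rule (mrg {0} ((\<lambda>_. 0)(0:=y)) h) 0 m (replicate_mset (1 + y) 0, {0}))) {xs. length xs < m}
       \<partial>measure_pmf (Pi_pmf ({..n} - {0}) 0 (\<lambda>_. eta))) \<le> ennreal (r ^ (1 + y))"
      using main[OF n p r th key rl, where s="(replicate_mset (1 + y) 0, {0})" and g="(\<lambda>_. 0)(0:=y)" and i=0 and m=m] mc
      unfolding m_def by simp
    also have "r ^ (1 + y) \<le> r"
      using r by (simp add: power_le_one mult_left_le)
    finally show "(\<integral>\<^sup>+h. emeasure (measure_pmf (aux_traj p n rule (mrg {0} ((\<lambda>_. 0)(0:=y)) h) 0 m (replicate_mset (1 + y) 0, {0}))) {xs. length xs < m}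
       \<partial>measure_pmf (Pi_pmf ({..n} - {0}) 0 (\<lambda>_. eta))) \<le> ennreal r" by (simp add: ennreal_leI)
  qed
  also have "\<dots> = ennreal r" by simp
  finally have eB: "emeasure (measure_pmf ?L) B \<le> ennreal r" .
  have "measure_pmf.prob ?L E = measure_pmf.prob ?L (E \<inter> set_pmf ?L)"
    by (simp add: measure_Int_set_pmf)
  also have "\<dots> \<le> measure_pmf.prob ?L B" by (rule measure_pmf.finite_measure_mono[OF sub]) simp
  also have "\<dots> \<le> r" using eB r by (simp add: measure_pmf.emeasure_eq_measure)
  finally show ?thesis unfolding prob_R_less_def E_def m_def .
qed


theorem lemma2p4:
  fixes eta :: "nat pmf" and p :: "nat \<Rightarrow> real" and c :: real
    and rule :: "nat \<Rightarrow> nat \<Rightarrow> aux_state \<Rightarrow> nat"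
  assumes "pmf eta 0 < 1"
    and "\<forall>n. 0 < p n \<and> p n \<le> 1"
    and "p \<longlonglongrightarrow> 1"
    and "0 < c" and "c < 1"
    and "\<forall>n k s. fst s \<noteq> {#} \<longrightarrow> rule n k s \<in># fst s"
  shows "(\<lambda>n. prob_R_less eta (p n) (rule n) n (\<lfloor>c * real n\<rfloor> - 1)) \<longlonglongrightarrow> 0"
proof (rule order_tendstoI)
  fix a :: real assume "a < 0"
  then show "eventually (\<lambda>n. a < prob_R_less eta (p n) (rule n) n (\<lfloor>c * real n\<rfloor> - 1)) sequentially"
    unfolding prob_R_less_def by (simp add: less_le_trans[OF _ measure_nonneg])
next
  fix a :: real assume a: "0 < a"
  define r where "r = min (a/2) (1/2)"
  have r: "0 < r" "r \<le> 1" "r < a" "r < 1" using a unfolding r_def by auto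
  define \<theta> where "\<theta> = 1 - c"
  have th: "0 \<le> \<theta>" "0 < \<theta>" using assms(5) unfolding \<theta>_def by auto
  define q where "q = 1 - pmf eta 0"
  have q: "0 < q" using assms(1) unfolding q_def by simp
  define C where "C = r*(1 - \<theta>*q*(1-r))"
  have "0 < \<theta>*q*(1-r)" using th q r by simp
  then have X: "0 < r*(\<theta>*q*(1-r))" using r by simp
  have "C = r - r*(\<theta>*q*(1-r))" unfolding C_def by (simp add: right_diff_distrib)
  then have Cr: "C < r" using X by linarith
  have lim: "(\<lambda>n. (1 - p n) + p n * C) \<longlonglongrightarrow> (1 - 1) + 1 * C"
    by (intro tendsto_intros assms(3))
  have ev1: "eventually (\<lambda>n. (1 - p n) + p n * C < r) sequentially"
    using order_tendstoD(2)[OF lim] Cr by simp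
  have ev2: "eventually (\<lambda>n. n \<ge> 1) sequentially" by (rule eventually_ge_at_top)
  show "eventually (\<lambda>n. prob_R_less eta (p n) (rule n) n (\<lfloor>c * real n\<rfloor> - 1) < a) sequentially"
    using ev1 ev2
  proof (eventually_elim)
    case (elim n)
    have pn: "0 \<le> p n" "p n \<le> 1" using assms(2) by (auto simp: less_imp_le)
    have key: "(1 - p n) + p n*r*(1 - \<theta>*(1 - pmf eta 0)*(1-r)) \<le> r"
      using elim(1) unfolding C_def q_def by (simp add: algebra_simps)
    have rl: "\<forall>k s. fst s \<noteq> {#} \<longrightarrow> rule n k s \<in># fst s" using assms(6) by blast
    have mle: "real (nat (\<lfloor>c * real n\<rfloor> - 1)) \<le> c * real n"
    proof (cases "\<lfloor>c * real n\<rfloor> - 1 \<le> 0")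
      case True then show ?thesis using assms(4) by simp
    next
      case False
      then have "real (nat (\<lfloor>c * real n\<rfloor> - 1)) = real_of_int (\<lfloor>c * real n\<rfloor> - 1)" by simp
      also have "\<dots> \<le> c * real n" by linarith
      finally show ?thesis .
    qed
    have mc: "\<theta> * n \<le> real n - real (nat (\<lfloor>c * real n\<rfloor> - 1))"
      using mle unfolding \<theta>_def by (simp add: algebra_simps)
    have "prob_R_less eta (p n) (rule n) n (\<lfloor>c * real n\<rfloor> - 1) \<le> r"
      by (rule law_bound[OF elim(2) pn r(1,2) th(1) key rl mc])
    then show ?case using r(3) by simp
  qed
qed

end
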